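(* Let $R$ be a t-unital ring and $f\colon L\to M$ a morphism of left $R$-modules whose kernel and cokernel are null-modules. Then (a) the morphism $R\otimes_R f\colon R\otimes_R L\to R\otimes_R M$ is an isomorphism; (b) the morphism $\mathrm{Hom}_R(R,f)\colon \mathrm{Hom}_R(R,L)\to\mathrm{Hom}_R(R,M)$ is an isomorphism.
   Context: Rings are associative, not necessarily unital; modules are not assumed unital. $R$ is t-unital if the multiplication map $R\otimes_R R\to R$ is an isomorphism. A left $R$-module $N$ is a null-module if $rn=0$ for all $r\in R$, $n\in N$. $\mathrm{Hom}_R$ denotes left $R$-module homomorphisms; $\mathrm{Hom}_R(R,L)$ is a left $R$-module via the right action of $R$ on itself. *)

theory Defs
  imports Main "HOL-Library.Poly_Mapping"
begin

text \<open>Rings are associative, not necessarily unital: type class ring (no 1).\<close>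

definition lmod :: "('r::ring \<Rightarrow> 'm::ab_group_add \<Rightarrow> 'm) \<Rightarrow> bool" where
  "lmod smul \<longleftrightarrow>
     (\<forall>r s x. smul (r + s) x = smul r x + smul s x) \<and>
     (\<forall>r x y. smul r (x + y) = smul r x + smul r y) \<and>
     (\<forall>r s x. smul (r * s) x = smul r (smul s x))"

definition lmod_hom ::
  "('r::ring \<Rightarrow> 'm::ab_group_add \<Rightarrow> 'm) \<Rightarrow> ('r \<Rightarrow> 'n::ab_group_add \<Rightarrow> 'n) \<Rightarrow> ('m \<Rightarrow> 'n) \<Rightarrow> bool" where
  "lmod_hom smul smul' f \<longleftrightarrow>
     (\<forall>x y. f (x + y) = f x + f y) \<and> (\<forall>r x. f (smul r x) = smul' r (f x))"

definition kernel_null :: "('r::ring \<Rightarrow> 'm::ab_group_add \<Rightarrow> 'm) \<Rightarrow> ('m \<Rightarrow> 'n::ab_group_add) \<Rightarrow> bool" where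
  "kernel_null smul f \<longleftrightarrow> (\<forall>r x. f x = 0 \<longrightarrow> smul r x = 0)"

definition cokernel_null :: "('r::ring \<Rightarrow> 'n::ab_group_add \<Rightarrow> 'n) \<Rightarrow> ('m \<Rightarrow> 'n) \<Rightarrow> bool" where
  "cokernel_null smul' f \<longleftrightarrow> (\<forall>r y. smul' r y \<in> range f)"

text \<open>Tensor product R \<otimes>_R L: the free abelian group on R \<times> L (finitely supported
  integer-valued functions) modulo the subgroup generated by the balanced-bilinearity relations.\<close>

inductive_set tensor_rel :: "('r::ring \<Rightarrow> 'm::ab_group_add \<Rightarrow> 'm) \<Rightarrow> (('r \<times> 'm) \<Rightarrow>\<^sub>0 int) set"
  for smul where
  zero: "0 \<in> tensor_rel smul"
| diff: "a \<in> tensor_rel smul \<Longrightarrow> b \<in> tensor_rel smul \<Longrightarrow> a - b \<in> tensor_rel smul"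
| add_left: "Poly_Mapping.single (r + s, x) 1 - Poly_Mapping.single (r, x) 1
               - Poly_Mapping.single (s, x) 1 \<in> tensor_rel smul"
| add_right: "Poly_Mapping.single (r, x + y) 1 - Poly_Mapping.single (r, x) 1
               - Poly_Mapping.single (r, y) 1 \<in> tensor_rel smul"
| balanced: "Poly_Mapping.single (r * s, x) 1 - Poly_Mapping.single (r, smul s x) 1
               \<in> tensor_rel smul"

definition tensor_cls :: "('r::ring \<Rightarrow> 'm::ab_group_add \<Rightarrow> 'm) \<Rightarrow> (('r \<times> 'm) \<Rightarrow>\<^sub>0 int)
    \<Rightarrow> (('r \<times> 'm) \<Rightarrow>\<^sub>0 int) set" where
  "tensor_cls smul u = {v. v - u \<in> tensor_rel smul}"

definition tensor :: "('r::ring \<Rightarrow> 'm::ab_group_add \<Rightarrow> 'm) \<Rightarrow> (('r \<times> 'm) \<Rightarrow>\<^sub>0 int) set set" where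
  "tensor smul = range (tensor_cls smul)"

definition free_map :: "('m \<Rightarrow> 'n) \<Rightarrow> (('r \<times> 'm) \<Rightarrow>\<^sub>0 int) \<Rightarrow> (('r \<times> 'n) \<Rightarrow>\<^sub>0 int)" where
  "free_map f u = (\<Sum>p\<in>Poly_Mapping.keys u. Poly_Mapping.single (fst p, f (snd p)) (Poly_Mapping.lookup u p))"

definition tensor_map :: "('r::ring \<Rightarrow> 'n::ab_group_add \<Rightarrow> 'n) \<Rightarrow> ('m::ab_group_add \<Rightarrow> 'n)
    \<Rightarrow> (('r \<times> 'm) \<Rightarrow>\<^sub>0 int) set \<Rightarrow> (('r \<times> 'n) \<Rightarrow>\<^sub>0 int) set" where
  "tensor_map smul' f C = tensor_cls smul' (free_map f (SOME u. u \<in> C))"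

definition zmult :: "int \<Rightarrow> 'a::ab_group_add \<Rightarrow> 'a" where
  "zmult n x = (if 0 \<le> n then (\<Sum>_\<in>{..<nat n}. x) else - (\<Sum>_\<in>{..<nat (- n)}. x))"

definition mult_map :: "(('r::ring \<times> 'r) \<Rightarrow>\<^sub>0 int) set \<Rightarrow> 'r" where
  "mult_map C = (let u = (SOME u. u \<in> C) in (\<Sum>p\<in>Poly_Mapping.keys u. zmult (Poly_Mapping.lookup u p) (fst p * snd p)))"

definition t_unital :: "'r::ring itself \<Rightarrow> bool" where
  "t_unital _ \<longleftrightarrow> bij_betw (mult_map :: (('r \<times> 'r) \<Rightarrow>\<^sub>0 int) set \<Rightarrow> 'r)
                      (tensor ((*) :: 'r \<Rightarrow> 'r \<Rightarrow> 'r)) UNIV"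

definition hom_R :: "('r::ring \<Rightarrow> 'm::ab_group_add \<Rightarrow> 'm) \<Rightarrow> ('r \<Rightarrow> 'm) set" where
  "hom_R smul = {g. lmod_hom (*) smul g}"

end

theory Submission
  imports Defs
begin

section \<open>Integer multiples\<close>

definition Sn :: "nat \<Rightarrow> 'a::ab_group_add \<Rightarrow> 'a" where
  "Sn n x = (\<Sum>_\<in>{..<n}. x)"

lemma Sn_add: "Sn (m + n) x = Sn m x + Sn n x"
  by (induction n) (auto simp: Sn_def add.assoc)

lemma zmult_Sn: "zmult n x = Sn (nat n) x - Sn (nat (- n)) x"
  by (simp add: zmult_def Sn_def)

lemma zmult_add: "zmult (a + b) x = zmult a x + zmult b x"
proof -
  have e: "nat (a+b) + nat (-a) + nat (-b) = nat a + nat b + nat (-(a+b))" by arith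
  have "Sn (nat (a+b)) x + Sn (nat (-a)) x + Sn (nat (-b)) x
        = Sn (nat a) x + Sn (nat b) x + Sn (nat (-(a+b))) x"
    by (metis Sn_add e)
  then show ?thesis unfolding zmult_Sn by (simp add: algebra_simps eq_diff_eq diff_eq_eq)
qed

lemma zmult_0 [simp]: "zmult 0 x = 0"
  by (simp add: zmult_def)

lemma zmult_1 [simp]: "zmult 1 x = x"
  by (simp add: zmult_def)

lemma zmult_diff: "zmult (a - b) x = zmult a x - zmult b x"
proof -
  have "zmult a x = zmult (a - b) x + zmult b x" using zmult_add[of "a - b" b x] by simp
  then show ?thesis by (metis add_diff_cancel)
qed

lemma addh_0: "(\<And>x y. h (x + y) = h x + h y) \<Longrightarrow> h (0::'a::ab_group_add) = (0::'b::ab_group_add)"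
proof -
  assume a: "\<And>x y. h (x + y) = h x + h y"
  have "h 0 = h 0 + h 0" using a[of 0 0] by simp
  then show ?thesis by simp
qed

lemma addh_diff: "(\<And>x y. h (x + y) = (h x + h y :: 'b::ab_group_add)) \<Longrightarrow> h ((a::'a::ab_group_add) - b) = h a - h b"
proof -
  assume a: "\<And>x y. h (x + y) = (h x + h y :: 'b::ab_group_add)"
  have "h a = h (a - b) + h b" using a[of "a - b" b] by simp
  then show ?thesis by (metis add_diff_cancel)
qed

lemma addh_Sn:
  assumes "\<And>x y. h (x + y) = (h x + h y :: 'b::ab_group_add)"
  shows "h (Sn n (x::'a::ab_group_add)) = Sn n (h x)"
proof (induction n)
  case 0 then show ?case using addh_0[of h] assms by (simp add: Sn_def)
next
  case (Suc n) then show ?case using assms by (simp add: Sn_def)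
qed

lemma addh_zmult:
  assumes "\<And>x y. h (x + y) = (h x + h y :: 'b::ab_group_add)"
  shows "h (zmult n (x::'a::ab_group_add)) = zmult n (h x)"
  unfolding zmult_Sn using addh_diff[of h] addh_Sn[of h] assms by simp

section \<open>Linear extension into an abelian group\<close>

definition Z :: "('p \<Rightarrow> 'a::ab_group_add) \<Rightarrow> ('p \<Rightarrow>\<^sub>0 int) \<Rightarrow> 'a" where
  "Z g u = (\<Sum>p\<in>Poly_Mapping.keys u. zmult (Poly_Mapping.lookup u p) (g p))"

lemma Z_superset:
  assumes "finite A" "Poly_Mapping.keys u \<subseteq> A"
  shows "Z g u = (\<Sum>p\<in>A. zmult (Poly_Mapping.lookup u p) (g p))"
  unfolding Z_def by (rule sum.mono_neutral_left) (use assms in \<open>auto simp: in_keys_iff\<close>)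

lemma Z_diff: "Z g (a - b) = Z g a - Z g b"
proof -
  let ?A = "Poly_Mapping.keys a \<union> Poly_Mapping.keys b"
  have "Z g (a - b) = (\<Sum>p\<in>?A. zmult (Poly_Mapping.lookup (a - b) p) (g p))"
    by (rule Z_superset) (auto simp: keys_diff)
  also have "\<dots> = (\<Sum>p\<in>?A. zmult (Poly_Mapping.lookup a p) (g p) - zmult (Poly_Mapping.lookup b p) (g p))"
    by (simp add: lookup_minus zmult_diff)
  also have "\<dots> = Z g a - Z g b"
    by (simp add: sum_subtractf Z_superset[of ?A a] Z_superset[of ?A b])
  finally show ?thesis .
qed

lemma Z_0 [simp]: "Z g 0 = 0"
  by (simp add: Z_def)

lemma Z_of [simp]: "Z g (frag_of x) = g x"
  by (simp add: Z_def keys_frag_of)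

lemma Z_add: "Z g (a + b) = Z g a + Z g b"
proof -
  have "a + b = a - (0 - b)" by simp
  then show ?thesis by (metis Z_diff Z_0 diff_0 diff_minus_eq_add)
qed

lemma Z_hom:
  assumes "\<And>x y. h (x + y) = (h x + h y :: 'b::ab_group_add)"
  shows "h (Z g u) = Z (\<lambda>p. h (g p)) u"
  using subset_UNIV[of "Poly_Mapping.keys u"]
proof (induction u rule: frag_induction)
  case zero then show ?case using addh_0[of h] assms by simp
next
  case (one x) then show ?case by simp
next
  case (diff a b) then show ?case using addh_diff[of h] assms by (simp add: Z_diff)
qed

lemma Z_compose: "Z g (frag_extend (\<lambda>p. frag_of (h p)) w) = Z (\<lambda>p. g (h p)) w"
  using subset_UNIV[of "Poly_Mapping.keys w"]
proof (induction w rule: frag_induction)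
  case (diff a b) then show ?case by (simp add: Z_diff frag_extend_diff frag_extend_add)
qed simp_all

lemma zmult_zero2 [simp]: "zmult n (0::'a::ab_group_add) = 0"
  by (simp add: zmult_def)

lemma Z_zero: "(\<And>p. g p = 0) \<Longrightarrow> Z g u = 0"
  by (simp add: Z_def)

lemma Z_cong: "(\<And>p. g p = h p) \<Longrightarrow> Z g u = Z h u"
  by (simp add: Z_def)

section \<open>Relations\<close>

lemma diff_diff_diff': "(a::'a::ab_group_add) - b - (c - d) = (a - c) - (b - d)"
  by (simp add: algebra_simps)

lemma telescope': "(a::'a::ab_group_add) - b + (b - c - d) = a - (c + d)"
  by (simp add: algebra_simps)

lemma add_diff_add': "(a::'a::ab_group_add) + b - (c + d) = (a - c) + (b - d)"
  by (simp add: algebra_simps)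

lemma fe_fun_add: "frag_extend (\<lambda>p. g p + h p) w = frag_extend g w + frag_extend h w"
  using subset_UNIV[of "Poly_Mapping.keys w"]
proof (induction w rule: frag_induction)
  case (diff a b)
  have "frag_extend (\<lambda>p. g p + h p) (a - b) = (frag_extend g a + frag_extend h a) - (frag_extend g b + frag_extend h b)"
    using diff by (simp only: frag_extend_diff frag_extend_add)
  also have "\<dots> = frag_extend g (a - b) + frag_extend h (a - b)"
    by (simp only: frag_extend_diff frag_extend_add add_diff_add')
  finally show ?case .
qed simp_all

lemma fe_compose: "frag_extend h (frag_extend g w) = frag_extend (\<lambda>p. frag_extend h (g p)) w"
  using subset_UNIV[of "Poly_Mapping.keys w"]
proof (induction w rule: frag_induction)
  case (diff a b) then show ?case by (simp add: frag_extend_diff frag_extend_add)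
qed simp_all

lemma cmul_frag_of: "frag_cmul c (frag_of x) = Poly_Mapping.single x c"
  by (rule poly_mapping_eqI) (simp add: lookup_single when_def)

lemma free_map_fe: "free_map f u = frag_extend (\<lambda>p. frag_of (fst p, f (snd p))) u"
  unfolding free_map_def frag_extend_def by (simp only: cmul_frag_of)

lemma tr_minus: "a \<in> tensor_rel s \<Longrightarrow> - a \<in> tensor_rel s"
  using tensor_rel.diff[OF tensor_rel.zero, of a s] by simp

lemma tr_add: "a \<in> tensor_rel s \<Longrightarrow> b \<in> tensor_rel s \<Longrightarrow> a + b \<in> tensor_rel s"
  using tensor_rel.diff[OF _ tr_minus, of a s b] by simp

lemma tr_diff: "a \<in> tensor_rel s \<Longrightarrow> b \<in> tensor_rel s \<Longrightarrow> a - b \<in> tensor_rel s"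
  by (rule tensor_rel.diff)

lemma tr_trans: "a - b \<in> tensor_rel s \<Longrightarrow> b - c \<in> tensor_rel s \<Longrightarrow> a - c \<in> tensor_rel s"
  using tr_add[of "a - b" s "b - c"] by simp

lemma tr_sym: "a - b \<in> tensor_rel s \<Longrightarrow> b - a \<in> tensor_rel s"
  using tr_minus[of "a - b" s] by simp

lemma tr_fe: "(\<And>p. g p \<in> tensor_rel s) \<Longrightarrow> frag_extend g w \<in> tensor_rel s"
  using subset_UNIV[of "Poly_Mapping.keys w"]
proof (induction w rule: frag_induction)
  case zero then show ?case by (simp add: tensor_rel.zero)
next
  case (diff a b) then show ?case by (simp add: frag_extend_diff frag_extend_add tr_diff)
qed simp_all

lemma tr_fe_cong: "(\<And>p. g p - h p \<in> tensor_rel s) \<Longrightarrow> frag_extend g w - frag_extend h w \<in> tensor_rel s"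
  using subset_UNIV[of "Poly_Mapping.keys w"]
proof (induction w rule: frag_induction)
  case zero then show ?case by (simp add: tensor_rel.zero)
next
  case (diff a b)
  have "frag_extend g (a - b) - frag_extend h (a - b)
      = (frag_extend g a - frag_extend h a) - (frag_extend g b - frag_extend h b)"
    by (simp only: frag_extend_diff frag_extend_add diff_diff_diff')
  then show ?case using diff by (simp add: tr_diff)
qed simp_all

lemma tr_r0: "frag_of (r, 0) \<in> tensor_rel s"
  using tr_minus[OF tensor_rel.add_right[of r 0 0 s]] by simp

lemma tr_0m: "frag_of (0, m) \<in> tensor_rel s"
  using tr_minus[OF tensor_rel.add_left[of 0 0 m s]] by simp

lemma tr_addl: "frag_of (a + b, m) - (frag_of (a, m) + frag_of (b, m)) \<in> tensor_rel s"
  using tensor_rel.add_left[of a b m s] by (simp only: diff_diff_eq)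

lemma tr_diffl: "frag_of (a - b, m) - (frag_of (a, m) - frag_of (b, m)) \<in> tensor_rel s"
proof -
  have e: "frag_of (a - b, m) - (frag_of (a, m) - frag_of (b, m))
     = - (frag_of (a - b + b, m) - frag_of (a - b, m) - frag_of (b, m))" by simp
  show ?thesis unfolding e by (rule tr_minus[OF tensor_rel.add_left])
qed

lemma tr_AL: "frag_of (Z h w, m) - frag_extend (\<lambda>p. frag_of (h p, m)) w \<in> tensor_rel s"
  using subset_UNIV[of "Poly_Mapping.keys w"]
proof (induction w rule: frag_induction)
  case zero then show ?case by (simp add: tr_0m)
next
  case (one x) then show ?case by (simp add: tensor_rel.zero)
next
  case (diff a b)
  have X: "frag_of (Z h a - Z h b, m) - (frag_of (Z h a, m) - frag_of (Z h b, m)) \<in> tensor_rel s"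
    by (rule tr_diffl)
  have e: "(frag_of (Z h a, m) - frag_of (Z h b, m))
     - (frag_extend (\<lambda>p. frag_of (h p, m)) a - frag_extend (\<lambda>p. frag_of (h p, m)) b)
     = (frag_of (Z h a, m) - frag_extend (\<lambda>p. frag_of (h p, m)) a)
     - (frag_of (Z h b, m) - frag_extend (\<lambda>p. frag_of (h p, m)) b)"
    by (rule diff_diff_diff')
  have Y: "(frag_of (Z h a, m) - frag_of (Z h b, m))
     - (frag_extend (\<lambda>p. frag_of (h p, m)) a - frag_extend (\<lambda>p. frag_of (h p, m)) b) \<in> tensor_rel s"
    unfolding e by (rule tr_diff[OF diff(1,2)])
  show ?case using tr_trans[OF X Y] by (simp add: Z_diff frag_extend_diff frag_extend_add)
qed

lemma cls_eq: "tensor_cls s a = tensor_cls s b \<longleftrightarrow> a - b \<in> tensor_rel s"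
proof
  assume "tensor_cls s a = tensor_cls s b"
  moreover have "a \<in> tensor_cls s a" by (simp add: tensor_cls_def tensor_rel.zero)
  ultimately show "a - b \<in> tensor_rel s" by (simp add: tensor_cls_def)
next
  assume ab: "a - b \<in> tensor_rel s"
  show "tensor_cls s a = tensor_cls s b"
    unfolding tensor_cls_def
  proof (rule Collect_cong, rule iffI)
    fix v assume "v - a \<in> tensor_rel s"
    then show "v - b \<in> tensor_rel s" by (rule tr_trans[OF _ ab])
  next
    fix v assume "v - b \<in> tensor_rel s"
    then show "v - a \<in> tensor_rel s" by (rule tr_trans[OF _ tr_sym[OF ab]])
  qed
qed

lemma cls_mem: "v \<in> tensor_cls s u \<longleftrightarrow> v - u \<in> tensor_rel s"
  by (simp add: tensor_cls_def)

lemma some_cls: "(SOME v. v \<in> tensor_cls s u) - u \<in> tensor_rel s"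
proof -
  have "u \<in> tensor_cls s u" by (simp add: tensor_cls_def tensor_rel.zero)
  then have "(SOME v. v \<in> tensor_cls s u) \<in> tensor_cls s u" by (rule someI)
  then show ?thesis by (simp add: cls_mem)
qed

section \<open>Multiplication\<close>

definition mu :: "('r::ring \<times> 'r \<Rightarrow>\<^sub>0 int) \<Rightarrow> 'r" where
  "mu w = Z (\<lambda>p. fst p * snd p) w"

lemma mu_rel: "w \<in> tensor_rel ((*) :: 'r::ring \<Rightarrow> _) \<Longrightarrow> mu w = 0"
proof (induction rule: tensor_rel.induct)
  case zero then show ?case by (simp add: mu_def)
next
  case (diff a b) then show ?case by (simp add: mu_def Z_diff)
next
  case (add_left r s x) then show ?case by (simp add: mu_def Z_diff Z_add algebra_simps)
next
  case (add_right r x y) then show ?case by (simp add: mu_def Z_diff Z_add algebra_simps)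
next
  case (balanced r s x) then show ?case by (simp add: mu_def Z_diff algebra_simps)
qed

lemma mult_map_cls: "mult_map (tensor_cls (*) u) = mu (u :: ('r::ring \<times> 'r \<Rightarrow>\<^sub>0 int))"
proof -
  have "mu (SOME v. v \<in> tensor_cls (*) u) - mu u = 0"
    using mu_rel[OF some_cls] by (simp add: mu_def Z_diff)
  moreover have "mult_map C = mu (SOME u. u \<in> C)" for C :: "('r \<times> 'r \<Rightarrow>\<^sub>0 int) set"
    by (simp add: mult_map_def mu_def Z_def Let_def)
  ultimately show ?thesis by simp
qed

lemma tu_surj: "t_unital TYPE('r::ring) \<Longrightarrow> \<exists>w. mu w = (r::'r)"
proof -
  assume t: "t_unital TYPE('r)"
  then have "mult_map ` range (tensor_cls ((*) :: 'r \<Rightarrow> 'r \<Rightarrow> 'r)) = UNIV"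
    by (simp add: t_unital_def bij_betw_def tensor_def)
  then have "r \<in> mult_map ` range (tensor_cls ((*) :: 'r \<Rightarrow> 'r \<Rightarrow> 'r))" by simp
  then obtain u where "r = mult_map (tensor_cls ((*) :: 'r \<Rightarrow> 'r \<Rightarrow> 'r) u)" by blast
  then have "mu u = r" by (simp add: mult_map_cls)
  then show ?thesis by blast
qed

lemma tu_inj: "t_unital TYPE('r::ring) \<Longrightarrow> mu w = mu (w' :: ('r \<times> 'r \<Rightarrow>\<^sub>0 int))
   \<Longrightarrow> w - w' \<in> tensor_rel (*)"
proof -
  assume t: "t_unital TYPE('r)" and e: "mu w = mu w'"
  from t have inj: "inj_on mult_map (range (tensor_cls ((*) :: 'r \<Rightarrow> 'r \<Rightarrow> 'r)))"
    by (simp add: t_unital_def bij_betw_def tensor_def)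
  have "mult_map (tensor_cls (*) w) = mult_map (tensor_cls (*) w')" by (simp add: mult_map_cls e)
  then have "tensor_cls (*) w = tensor_cls (*) w'" using inj_onD[OF inj _ rangeI rangeI] by blast
  then show ?thesis by (simp add: cls_eq)
qed

lemma hom_add: "g \<in> hom_R s \<Longrightarrow> g (x + y) = g x + g y"
  by (simp add: hom_R_def lmod_hom_def)

lemma hom_mul: "g \<in> hom_R s \<Longrightarrow> g (r * x) = s r (g x)"
  by (simp add: hom_R_def lmod_hom_def)

locale P56 =
  fixes smulL :: "'r::ring \<Rightarrow> 'l::ab_group_add \<Rightarrow> 'l"
    and smulM :: "'r \<Rightarrow> 'm::ab_group_add \<Rightarrow> 'm"
    and f :: "'l \<Rightarrow> 'm"
  assumes tu: "t_unital TYPE('r)"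
    and lL: "lmod smulL" and lM: "lmod smulM"
    and hf: "lmod_hom smulL smulM f"
    and kn: "kernel_null smulL f"
    and cn: "cokernel_null smulM f"
begin

lemma f_add: "f (x + y) = f x + f y" using hf by (simp add: lmod_hom_def)
lemma f_smul: "f (smulL r x) = smulM r (f x)" using hf by (simp add: lmod_hom_def)
lemma f_diff: "f (x - y) = f x - f y" by (rule addh_diff) (rule f_add)
lemma L_addl: "smulL (r + s) x = smulL r x + smulL s x" using lL by (simp add: lmod_def)
lemma L_addr: "smulL r (x + y) = smulL r x + smulL r y" using lL by (simp add: lmod_def)
lemma L_assoc: "smulL (r * s) x = smulL r (smulL s x)" using lL by (simp add: lmod_def)
lemma M_addl: "smulM (r + s) x = smulM r x + smulM s x" using lM by (simp add: lmod_def)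
lemma M_addr: "smulM r (x + y) = smulM r x + smulM r y" using lM by (simp add: lmod_def)
lemma M_assoc: "smulM (r * s) x = smulM r (smulM s x)" using lM by (simp add: lmod_def)
lemma L_diffr: "smulL r (x - y) = smulL r x - smulL r y" by (rule addh_diff) (rule L_addr)
lemma kn': "f x = 0 \<Longrightarrow> smulL r x = 0" using kn by (simp add: kernel_null_def)
lemma cn': "smulM r y \<in> range f" using cn by (simp add: cokernel_null_def)

definition lift :: "'m \<Rightarrow> 'l" where "lift y = (SOME l. f l = y)"

lemma lift: "y \<in> range f \<Longrightarrow> f (lift y) = y"
proof -
  assume "y \<in> range f"
  then obtain l where "f l = y" by blast
  then show ?thesis unfolding lift_def by (rule someI)
qed

lemma lift_smul: "f (lift (smulM r y)) = smulM r y"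
  by (rule lift[OF cn'])

definition W :: "'r \<Rightarrow> ('r \<times> 'r \<Rightarrow>\<^sub>0 int)" where "W r = (SOME w. mu w = r)"

lemma mu_W: "mu (W r) = r"
  unfolding W_def using tu_surj[OF tu, of r] by (rule someI_ex)

lemma KN: "f k = 0 \<Longrightarrow> frag_of (a, k) \<in> tensor_rel smulL"
proof -
  assume k: "f k = 0"
  have 1: "frag_of (mu (W a), k) - frag_extend (\<lambda>p. frag_of (fst p * snd p, k)) (W a) \<in> tensor_rel smulL"
    unfolding mu_def by (rule tr_AL)
  have 2: "frag_extend (\<lambda>p. frag_of (fst p * snd p, k)) (W a) \<in> tensor_rel smulL"
  proof (rule tr_fe)
    fix p :: "'r \<times> 'r"
    have "frag_of (fst p * snd p, k) - frag_of (fst p, smulL (snd p) k) \<in> tensor_rel smulL"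
      by (rule tensor_rel.balanced)
    then show "frag_of (fst p * snd p, k) \<in> tensor_rel smulL"
      using tr_add[OF _ tr_r0[of "fst p" smulL]] kn'[OF k, of "snd p"] by fastforce
  qed
  show ?thesis using tr_add[OF 1 2] mu_W by simp
qed

lemma Lfeq: "f x = f y \<Longrightarrow> frag_of (a, x) - frag_of (a, y) \<in> tensor_rel smulL"
proof -
  assume e: "f x = f y"
  have 1: "frag_of (a, y + (x - y)) - frag_of (a, y) - frag_of (a, x - y) \<in> tensor_rel smulL"
    by (rule tensor_rel.add_right)
  have 2: "frag_of (a, x - y) \<in> tensor_rel smulL" by (rule KN) (simp add: f_diff e)
  show ?thesis using tr_add[OF 1 2] by simp
qed

lemma Lfadd: "f l = f l1 + f l2 \<Longrightarrow> frag_of (a, l) - (frag_of (a, l1) + frag_of (a, l2)) \<in> tensor_rel smulL"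
proof -
  assume e: "f l = f l1 + f l2"
  have A: "frag_of (a, l) - frag_of (a, l1 + l2) \<in> tensor_rel smulL" by (rule Lfeq) (simp add: e f_add)
  have B: "frag_of (a, l1 + l2) - frag_of (a, l1) - frag_of (a, l2) \<in> tensor_rel smulL"
    by (rule tensor_rel.add_right)
  show ?thesis using tr_add[OF A B] by (simp only: telescope')
qed

definition Phi :: "'m \<Rightarrow> ('r \<times> 'r \<Rightarrow>\<^sub>0 int) \<Rightarrow> ('r \<times> 'l \<Rightarrow>\<^sub>0 int)" where
  "Phi m w = frag_extend (\<lambda>p. frag_of (fst p, lift (smulM (snd p) m))) w"

definition psi :: "('r \<times> 'm \<Rightarrow>\<^sub>0 int) \<Rightarrow> ('r \<times> 'l \<Rightarrow>\<^sub>0 int)" where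
  "psi v = frag_extend (\<lambda>q. Phi (snd q) (W (fst q))) v"

lemma Phi_rel: "w \<in> tensor_rel (*) \<Longrightarrow> Phi m w \<in> tensor_rel smulL"
proof (induction rule: tensor_rel.induct)
  case zero then show ?case by (simp add: Phi_def tensor_rel.zero)
next
  case (diff a b) then show ?case by (simp add: Phi_def frag_extend_diff frag_extend_add tr_diff)
next
  case (add_left r s x) then show ?case by (simp add: Phi_def frag_extend_diff frag_extend_add tensor_rel.add_left)
next
  case (add_right r x y)
  have "frag_of (r, lift (smulM (x + y) m)) - (frag_of (r, lift (smulM x m)) + frag_of (r, lift (smulM y m)))
     \<in> tensor_rel smulL"
    by (rule Lfadd) (unfold lift_smul, rule M_addl)
  then show ?case by (simp add: Phi_def frag_extend_diff frag_extend_add frag_extend_add diff_diff_eq)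
next
  case (balanced r s x)
  let ?l = "lift (smulM x m)"
  have A: "frag_of (r * s, ?l) - frag_of (r, smulL s ?l) \<in> tensor_rel smulL"
    by (rule tensor_rel.balanced)
  have B: "frag_of (r, smulL s ?l) - frag_of (r, lift (smulM (s * x) m)) \<in> tensor_rel smulL"
    by (rule Lfeq) (simp add: f_smul lift_smul M_assoc)
  show ?case using tr_trans[OF A B] by (simp add: Phi_def frag_extend_diff frag_extend_add)
qed

lemma Phi_mu: "mu w = mu w' \<Longrightarrow> Phi m w - Phi m w' \<in> tensor_rel smulL"
  using Phi_rel[OF tu_inj[OF tu]] by (simp add: Phi_def frag_extend_diff frag_extend_add)

lemma Phi_add: "Phi m (a + b) = Phi m a + Phi m b"
  by (simp add: Phi_def frag_extend_add)

lemma psi_of: "psi (frag_of q) = Phi (snd q) (W (fst q))"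
  by (simp add: psi_def)

lemma psi_rel: "v \<in> tensor_rel smulM \<Longrightarrow> psi v \<in> tensor_rel smulL"
proof (induction rule: tensor_rel.induct)
  case zero then show ?case by (simp add: psi_def tensor_rel.zero)
next
  case (diff a b) then show ?case by (simp add: psi_def frag_extend_diff frag_extend_add tr_diff)
next
  case (add_left r s x)
  have "mu (W (r + s)) = mu (W r + W s)" by (simp add: mu_def Z_add mu_W[unfolded mu_def])
  from Phi_mu[OF this, of x] show ?case
    by (simp add: psi_def frag_extend_diff frag_extend_add Phi_add diff_diff_eq)
next
  case (add_right r x y)
  have "frag_extend (\<lambda>p. frag_of (fst p, lift (smulM (snd p) (x + y)))) (W r)
     - frag_extend (\<lambda>p. frag_of (fst p, lift (smulM (snd p) x)) + frag_of (fst p, lift (smulM (snd p) y))) (W r)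
     \<in> tensor_rel smulL"
    by (rule tr_fe_cong, rule Lfadd) (unfold lift_smul, rule M_addr)
  then show ?case by (simp add: psi_def frag_extend_diff frag_extend_add Phi_def fe_fun_add diff_diff_eq)
next
  case (balanced r s x)
  define w2 where "w2 = frag_extend (\<lambda>p. frag_of (fst p, snd p * s)) (W r)"
  have "mu w2 = Z (\<lambda>p. fst p * snd p * s) (W r)"
    unfolding w2_def mu_def using Z_compose[of "\<lambda>p. fst p * snd p" "\<lambda>p. (fst p, snd p * s)" "W r"]
    by (simp add: mult.assoc)
  also have "\<dots> = Z (\<lambda>p. fst p * snd p) (W r) * s"
    using Z_hom[of "\<lambda>x. x * s" "\<lambda>p. fst p * snd p" "W r"] by (simp add: distrib_right)
  also have "\<dots> = mu (W (r * s))" using mu_W by (simp add: mu_def)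
  finally have "Phi x (W (r * s)) - Phi x w2 \<in> tensor_rel smulL" using Phi_mu by metis
  moreover have "Phi x w2 = Phi (smulM s x) (W r)"
    unfolding w2_def Phi_def fe_compose by (simp add: M_assoc)
  ultimately show ?case by (simp add: psi_def frag_extend_diff frag_extend_add)
qed

lemma free_rel: "u \<in> tensor_rel smulL \<Longrightarrow> free_map f u \<in> tensor_rel smulM"
proof (induction rule: tensor_rel.induct)
  case zero then show ?case by (simp add: free_map_fe tensor_rel.zero)
next
  case (diff a b) then show ?case by (simp add: free_map_fe frag_extend_diff frag_extend_add tr_diff)
next
  case (add_left r s x) then show ?case by (simp add: free_map_fe frag_extend_diff frag_extend_add tensor_rel.add_left)
next
  case (add_right r x y) then show ?case by (simp add: free_map_fe frag_extend_diff frag_extend_add f_add tensor_rel.add_right)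
next
  case (balanced r s x) then show ?case by (simp add: free_map_fe frag_extend_diff frag_extend_add f_smul tensor_rel.balanced)
qed

lemma psi_free: "psi (free_map f u) - u \<in> tensor_rel smulL"
proof -
  have key: "Phi (f l) (W r) - frag_of (r, l) \<in> tensor_rel smulL" for r l
  proof -
    have 1: "Phi (f l) (W r) - frag_extend (\<lambda>p. frag_of (fst p, smulL (snd p) l)) (W r) \<in> tensor_rel smulL"
      unfolding Phi_def by (rule tr_fe_cong, rule Lfeq) (simp add: lift_smul f_smul)
    have 2: "frag_extend (\<lambda>p. frag_of (fst p, smulL (snd p) l)) (W r)
           - frag_extend (\<lambda>p. frag_of (fst p * snd p, l)) (W r) \<in> tensor_rel smulL"
      by (rule tr_fe_cong, rule tr_sym, rule tensor_rel.balanced)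
    have 3: "frag_extend (\<lambda>p. frag_of (fst p * snd p, l)) (W r) - frag_of (r, l) \<in> tensor_rel smulL"
      using tr_sym[OF tr_AL[of "\<lambda>p. fst p * snd p" "W r" l smulL]] mu_W by (simp add: mu_def)
    show ?thesis using tr_trans[OF tr_trans[OF 1 2] 3] .
  qed
  have "psi (free_map f u) = frag_extend (\<lambda>p. Phi (f (snd p)) (W (fst p))) u"
    by (simp add: psi_def free_map_fe fe_compose)
  moreover have "frag_extend (\<lambda>p. Phi (f (snd p)) (W (fst p))) u - frag_extend frag_of u \<in> tensor_rel smulL"
  proof (rule tr_fe_cong)
    fix p :: "'r \<times> 'l"
    obtain r l where "p = (r, l)" by (cases p)
    then show "Phi (f (snd p)) (W (fst p)) - frag_of p \<in> tensor_rel smulL"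
      using key[of l r] by simp
  qed
  moreover have "frag_extend frag_of u = u" by (rule frag_expansion[symmetric])
  ultimately show ?thesis by simp
qed

lemma free_psi: "free_map f (psi v) - v \<in> tensor_rel smulM"
proof -
  have key: "frag_extend (\<lambda>p. frag_of (fst p, smulM (snd p) m)) (W r) - frag_of (r, m) \<in> tensor_rel smulM" for r m
  proof -
    have 2: "frag_extend (\<lambda>p. frag_of (fst p, smulM (snd p) m)) (W r)
           - frag_extend (\<lambda>p. frag_of (fst p * snd p, m)) (W r) \<in> tensor_rel smulM"
      by (rule tr_fe_cong, rule tr_sym, rule tensor_rel.balanced)
    have 3: "frag_extend (\<lambda>p. frag_of (fst p * snd p, m)) (W r) - frag_of (r, m) \<in> tensor_rel smulM"
      using tr_sym[OF tr_AL[of "\<lambda>p. fst p * snd p" "W r" m smulM]] mu_W by (simp add: mu_def)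
    show ?thesis using tr_trans[OF 2 3] .
  qed
  have "free_map f (psi v) = frag_extend (\<lambda>q. frag_extend (\<lambda>p. frag_of (fst p, smulM (snd p) (snd q))) (W (fst q))) v"
  proof -
    have ph: "frag_extend (\<lambda>p. frag_of (fst p, f (snd p))) (Phi m w)
        = frag_extend (\<lambda>p. frag_of (fst p, smulM (snd p) m)) w" for m w
      unfolding Phi_def fe_compose by (simp add: lift_smul)
    show ?thesis unfolding free_map_fe psi_def fe_compose ph ..
  qed
  moreover have "frag_extend (\<lambda>q. frag_extend (\<lambda>p. frag_of (fst p, smulM (snd p) (snd q))) (W (fst q))) v
      - frag_extend frag_of v \<in> tensor_rel smulM"
  proof (rule tr_fe_cong)
    fix p :: "'r \<times> 'm"
    obtain r m where "p = (r, m)" by (cases p)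
    then show "frag_extend (\<lambda>pa. frag_of (fst pa, smulM (snd pa) (snd p))) (W (fst p)) - frag_of p \<in> tensor_rel smulM"
      using key[of m r] by simp
  qed
  moreover have "frag_extend frag_of v = v" by (rule frag_expansion[symmetric])
  ultimately show ?thesis by simp
qed

lemma tmap_cls: "tensor_map smulM f (tensor_cls smulL u) = tensor_cls smulM (free_map f u)"
proof -
  have "free_map f (SOME v. v \<in> tensor_cls smulL u) - free_map f u \<in> tensor_rel smulM"
    using free_rel[OF some_cls[of smulL u]] by (simp add: free_map_fe frag_extend_diff frag_extend_add)
  then show ?thesis unfolding tensor_map_def by (simp add: cls_eq)
qed

theorem part_a: "bij_betw (tensor_map smulM f) (tensor smulL) (tensor smulM)"
  unfolding bij_betw_def
proof
  show "inj_on (tensor_map smulM f) (tensor smulL)"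
  proof (rule inj_onI)
    fix A B assume "A \<in> tensor smulL" "B \<in> tensor smulL" and e: "tensor_map smulM f A = tensor_map smulM f B"
    then obtain a b where ab: "A = tensor_cls smulL a" "B = tensor_cls smulL b" by (auto simp: tensor_def)
    then have "free_map f a - free_map f b \<in> tensor_rel smulM" using e by (simp add: tmap_cls cls_eq)
    then have "free_map f (a - b) \<in> tensor_rel smulM" by (simp add: free_map_fe frag_extend_diff frag_extend_add)
    then have 1: "psi (free_map f (a - b)) \<in> tensor_rel smulL" by (rule psi_rel)
    have "psi (free_map f (a - b)) - (psi (free_map f (a - b)) - (a - b)) \<in> tensor_rel smulL"
      by (rule tr_diff[OF 1 psi_free])
    then have "a - b \<in> tensor_rel smulL" by simp
    then show "A = B" using ab by (simp add: cls_eq)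
  qed
next
  show "tensor_map smulM f ` tensor smulL = tensor smulM"
  proof
    show "tensor_map smulM f ` tensor smulL \<subseteq> tensor smulM"
      by (auto simp: tensor_def tmap_cls)
  next
    show "tensor smulM \<subseteq> tensor_map smulM f ` tensor smulL"
    proof
      fix B assume "B \<in> tensor smulM"
      then obtain v where v: "B = tensor_cls smulM v" by (auto simp: tensor_def)
      have "B = tensor_map smulM f (tensor_cls smulL (psi v))"
        using tr_sym[OF free_psi[of v]] by (simp add: v tmap_cls cls_eq)
      then show "B \<in> tensor_map smulM f ` tensor smulL" by (auto simp: tensor_def)
    qed
  qed
qed


lemma lift_g: "g' \<in> hom_R smulM \<Longrightarrow> f (lift (g' b)) = g' b"
proof -
  assume g: "g' \<in> hom_R smulM"
  have "g' b = g' (Z (\<lambda>p. fst p * snd p) (W b))" using mu_W[of b] by (simp add: mu_def)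
  also have "\<dots> = Z (\<lambda>p. g' (fst p * snd p)) (W b)"
    by (rule Z_hom[where h = g' and g = "\<lambda>p. fst p * snd p" and u = "W b"]) (rule hom_add[OF g])
  also have "\<dots> = Z (\<lambda>p. f (lift (smulM (fst p) (g' (snd p))))) (W b)"
    by (rule Z_cong) (simp only: hom_mul[OF g] lift_smul)
  also have "\<dots> = f (Z (\<lambda>p. lift (smulM (fst p) (g' (snd p)))) (W b))"
    by (rule Z_hom[where h = f and g = "\<lambda>p. lift (smulM (fst p) (g' (snd p)))" and u = "W b", symmetric])
       (rule f_add)
  finally have "g' b \<in> range f" by blast
  then show ?thesis by (rule lift)
qed

definition Theta :: "('r \<Rightarrow> 'm) \<Rightarrow> ('r \<times> 'r \<Rightarrow>\<^sub>0 int) \<Rightarrow> 'l" where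
  "Theta g' w = Z (\<lambda>p. smulL (fst p) (lift (g' (snd p)))) w"

lemma Theta_rel:
  assumes g: "g' \<in> hom_R smulM" and w: "w \<in> tensor_rel (*)"
  shows "Theta g' w = 0"
  using w
proof (induction rule: tensor_rel.induct)
  case zero then show ?case by (simp add: Theta_def)
next
  case (diff a b) then show ?case by (simp add: Theta_def Z_diff)
next
  case (add_left r s x) then show ?case by (simp add: Theta_def Z_diff Z_add L_addl)
next
  case (add_right r x y)
  have e: "f (lift (g' (x + y))) = f (lift (g' x)) + f (lift (g' y))"
    by (unfold lift_g[OF g]) (rule hom_add[OF g])
  have "f (lift (g' (x + y)) - lift (g' x) - lift (g' y)) = 0"
    by (simp only: f_diff e) simp
  then have "smulL r (lift (g' (x + y)) - lift (g' x) - lift (g' y)) = 0" by (rule kn')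
  then show ?case by (simp add: Theta_def Z_diff Z_add L_diffr L_addr)
next
  case (balanced r s x)
  have e: "f (lift (g' (s * x))) = smulM s (f (lift (g' x)))"
    by (unfold lift_g[OF g]) (rule hom_mul[OF g])
  have "f (smulL s (lift (g' x)) - lift (g' (s * x))) = 0"
    by (simp only: f_diff f_smul e) simp
  then have "smulL r (smulL s (lift (g' x)) - lift (g' (s * x))) = 0" by (rule kn')
  then show ?case by (simp add: Theta_def Z_diff Z_add L_diffr L_assoc)
qed

lemma Theta_mu:
  assumes g: "g' \<in> hom_R smulM" and e: "mu w = mu w'"
  shows "Theta g' w = Theta g' w'"
proof -
  have "Theta g' (w - w') = 0" by (rule Theta_rel[OF g tu_inj[OF tu e]])
  then show ?thesis by (simp add: Theta_def Z_diff)
qed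

definition gl :: "('r \<Rightarrow> 'm) \<Rightarrow> 'r \<Rightarrow> 'l" where "gl g' r = Theta g' (W r)"

lemma gl_hom: assumes g: "g' \<in> hom_R smulM" shows "gl g' \<in> hom_R smulL"
  unfolding hom_R_def lmod_hom_def
proof (intro CollectI conjI allI)
  fix x y
  have "mu (W (x + y)) = mu (W x + W y)" by (simp add: mu_def Z_add mu_W[unfolded mu_def])
  then have "Theta g' (W (x + y)) = Theta g' (W x + W y)" by (rule Theta_mu[OF g])
  then show "gl g' (x + y) = gl g' x + gl g' y" by (simp add: gl_def Theta_def Z_add)
next
  fix r x
  define w2 where "w2 = frag_extend (\<lambda>p. frag_of (r * fst p, snd p)) (W x)"
  have "mu w2 = Z (\<lambda>p. r * fst p * snd p) (W x)"
    unfolding w2_def mu_def using Z_compose[of "\<lambda>p. fst p * snd p" "\<lambda>p. (r * fst p, snd p)" "W x"]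
    by simp
  also have "\<dots> = Z (\<lambda>p. r * (fst p * snd p)) (W x)" by (simp only: mult.assoc)
  also have "\<dots> = r * Z (\<lambda>p. fst p * snd p) (W x)"
    by (rule Z_hom[where h = "\<lambda>y. r * y" and g = "\<lambda>p. fst p * snd p" and u = "W x", symmetric])
       (rule distrib_left)
  also have "\<dots> = mu (W (r * x))" using mu_W by (simp add: mu_def)
  finally have "Theta g' (W (r * x)) = Theta g' w2" by (rule Theta_mu[OF g, symmetric])
  also have "Theta g' w2 = Z (\<lambda>p. smulL (r * fst p) (lift (g' (snd p)))) (W x)"
    unfolding w2_def Theta_def
    using Z_compose[of "\<lambda>p. smulL (fst p) (lift (g' (snd p)))" "\<lambda>p. (r * fst p, snd p)" "W x"]
    by simp
  also have "\<dots> = Z (\<lambda>p. smulL r (smulL (fst p) (lift (g' (snd p))))) (W x)"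
    by (simp only: L_assoc)
  also have "\<dots> = smulL r (Theta g' (W x))"
    unfolding Theta_def
    by (rule Z_hom[where h = "smulL r" and g = "\<lambda>p. smulL (fst p) (lift (g' (snd p)))" and u = "W x", symmetric])
       (rule L_addr)
  finally show "gl g' (r * x) = smulL r (gl g' x)" by (simp add: gl_def)
qed

lemma gl_comp: assumes g: "g' \<in> hom_R smulM" shows "f \<circ> gl g' = g'"
proof
  fix r
  have "(f \<circ> gl g') r = f (Z (\<lambda>p. smulL (fst p) (lift (g' (snd p)))) (W r))"
    by (simp add: gl_def Theta_def)
  also have "\<dots> = Z (\<lambda>p. f (smulL (fst p) (lift (g' (snd p))))) (W r)"
    by (rule Z_hom[where h = f and g = "\<lambda>p. smulL (fst p) (lift (g' (snd p)))" and u = "W r"]) (rule f_add)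
  also have "\<dots> = Z (\<lambda>p. g' (fst p * snd p)) (W r)"
    by (rule Z_cong) (simp only: f_smul lift_g[OF g] hom_mul[OF g])
  also have "\<dots> = g' (Z (\<lambda>p. fst p * snd p) (W r))"
    by (rule Z_hom[where h = g' and g = "\<lambda>p. fst p * snd p" and u = "W r", symmetric]) (rule hom_add[OF g])
  also have "\<dots> = g' r" using mu_W[of r] by (simp add: mu_def)
  finally show "(f \<circ> gl g') r = g' r" .
qed

lemma comp_hom: "g \<in> hom_R smulL \<Longrightarrow> f \<circ> g \<in> hom_R smulM"
  by (simp add: hom_R_def lmod_hom_def f_add f_smul)

lemma hom_expand:
  assumes g: "g \<in> hom_R smulL"
  shows "g r = Z (\<lambda>p. smulL (fst p) (g (snd p))) (W r)"
proof -
  have "g r = g (Z (\<lambda>p. fst p * snd p) (W r))" using mu_W[of r] by (simp add: mu_def)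
  also have "\<dots> = Z (\<lambda>p. g (fst p * snd p)) (W r)"
    by (rule Z_hom[where h = g and g = "\<lambda>p. fst p * snd p" and u = "W r"]) (rule hom_add[OF g])
  also have "\<dots> = Z (\<lambda>p. smulL (fst p) (g (snd p))) (W r)"
    by (rule Z_cong) (simp only: hom_mul[OF g])
  finally show ?thesis .
qed

lemma comp_inj:
  assumes g1: "g1 \<in> hom_R smulL" and g2: "g2 \<in> hom_R smulL" and e: "f \<circ> g1 = f \<circ> g2"
  shows "g1 = g2"
proof
  fix r
  have "smulL a (g1 b) = smulL a (g2 b)" for a b
  proof -
    have "f (g1 b) = f (g2 b)" using fun_cong[OF e, of b] by simp
    then have "f (g1 b - g2 b) = 0" by (simp add: f_diff)
    then have "smulL a (g1 b - g2 b) = 0" by (rule kn')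
    then show ?thesis by (simp add: L_diffr)
  qed
  then show "g1 r = g2 r"
    by (simp add: hom_expand[OF g1, of r] hom_expand[OF g2, of r])
qed

theorem part_b: "bij_betw (\<lambda>g. f \<circ> g) (hom_R smulL) (hom_R smulM)"
  unfolding bij_betw_def
proof
  show "inj_on (\<lambda>g. f \<circ> g) (hom_R smulL)"
    by (rule inj_onI) (rule comp_inj)
next
  show "(\<lambda>g. f \<circ> g) ` hom_R smulL = hom_R smulM"
  proof
    show "(\<lambda>g. f \<circ> g) ` hom_R smulL \<subseteq> hom_R smulM" using comp_hom by blast
  next
    show "hom_R smulM \<subseteq> (\<lambda>g. f \<circ> g) ` hom_R smulL"
    proof
      fix g' assume g: "g' \<in> hom_R smulM"
      have "g' = f \<circ> gl g'" using gl_comp[OF g] by simp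
      then show "g' \<in> (\<lambda>g. f \<circ> g) ` hom_R smulL" using gl_hom[OF g] by blast
    qed
  qed
qed

end

theorem proposition5p6:
  fixes smulL :: "'r::ring \<Rightarrow> 'l::ab_group_add \<Rightarrow> 'l"
    and smulM :: "'r \<Rightarrow> 'm::ab_group_add \<Rightarrow> 'm"
    and f :: "'l \<Rightarrow> 'm"
  assumes "t_unital TYPE('r)"
    and "lmod smulL" and "lmod smulM"
    and "lmod_hom smulL smulM f"
    and "kernel_null smulL f"
    and "cokernel_null smulM f"
  shows "bij_betw (tensor_map smulM f) (tensor smulL) (tensor smulM) \<and>
         bij_betw (\<lambda>g. f \<circ> g) (hom_R smulL) (hom_R smulM)"
proof -
  interpret P56 smulL smulM f using assms by (rule P56.intro)
  show ?thesis using part_a part_b by blast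
qed

end
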